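(* For $a>0$ define $P_1:\mathbb{R}^{3\times3}\to\mathbb{R}$ by $P_1(R)=\sqrt{\|R^TR-I\|_F^2+a}$. Then $P_1$ is twice differentiable with locally Lipschitz second derivatives, and there is a constant $L$ (depending on $a$) such that $P_1$ is $L$-curvature bounded.
   Context: $\|\cdot\|_F$ is the Frobenius norm and $R$ is identified with a vector in $\mathbb{R}^9$. A function $\phi$ is $L$-curvature bounded if $\phi(x)+\frac L2\|x\|^2$ is convex and $\|\nabla\phi(x)-\nabla\phi(x')\|\le L\|x-x'\|$ for all $x,x'$. *)

theory Defs
  imports "HOL-Analysis.Analysis"
begin

text \<open>Frobenius norm of a matrix (as in the paper).  On the type real^'n^'m it
  coincides with the library norm, i.e. the Euclidean norm after identifying
  the matrix with a vector in R^(m*n).\<close>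
definition frob_norm :: "real^'n^'m \<Rightarrow> real" where
  "frob_norm M = sqrt (\<Sum>i\<in>UNIV. \<Sum>j\<in>UNIV. (M$i$j)^2)"

definition P1 :: "real \<Rightarrow> real^3^3 \<Rightarrow> real" where
  "P1 a R = sqrt ((frob_norm (transpose R ** R - mat 1))^2 + a)"

definition curvature_bounded :: "real \<Rightarrow> ('a::euclidean_space \<Rightarrow> real) \<Rightarrow> bool" where
  "curvature_bounded L \<phi> \<longleftrightarrow>
     convex_on UNIV (\<lambda>x. \<phi> x + L / 2 * (norm x)^2) \<and>
     (\<exists>g. (\<forall>x. (\<phi> has_derivative (\<lambda>h. g x \<bullet> h)) (at x)) \<and>
          (\<forall>x x'. norm (g x - g x') \<le> L * norm (x - x')))"

end

theory Submission
  imports Defs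
begin

lemma norm_vec_sq: "(norm (x::'a::real_normed_vector^'n))^2 = (\<Sum>i\<in>UNIV. (norm (x$i))^2)"
  unfolding norm_vec_def L2_set_def by (simp add: sum_nonneg)

lemma inner_mat: "inner (A::real^'n^'m) B = (\<Sum>i\<in>UNIV. \<Sum>j\<in>UNIV. A$i$j * B$i$j)"
  by (simp add: inner_vec_def)

lemma frob_norm_eq: "frob_norm (A::real^'n^'m) = norm A"
  unfolding frob_norm_def norm_eq_sqrt_inner inner_mat by (simp add: power2_eq_square)

lemma mm_entry: "((A::real^'n^'m) ** B)$i$j = inner (A$i) (transpose B $ j)"
  by (simp add: matrix_matrix_mult_def inner_vec_def transpose_def mult.commute)

lemma norm_transpose: "norm (transpose (A::real^'n^'m)) = norm A"
proof -
  have "norm (transpose A)^2 = norm A ^2"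
    unfolding power2_norm_eq_inner inner_mat transpose_def by (simp, rule sum.swap)
  thus ?thesis by (simp add: power2_eq_iff_nonneg)
qed

lemma norm_mm: "norm ((A::real^'n^'m) ** B) \<le> norm A * norm (B::real^'p^'n)"
proof -
  have "norm (A ** B)^2 = (\<Sum>i\<in>UNIV. \<Sum>j\<in>UNIV. (inner (A$i) (transpose B $ j))^2)"
    by (simp add: norm_vec_sq mm_entry)
  also have "\<dots> \<le> (\<Sum>i\<in>UNIV. \<Sum>j\<in>UNIV. (norm (A$i))^2 * (norm (transpose B $ j))^2)"
  proof (intro sum_mono)
    fix i j
    have "\<bar>inner (A$i) (transpose B $ j)\<bar> \<le> norm (A$i) * norm (transpose B $ j)"
      by (rule Cauchy_Schwarz_ineq2)
    hence "\<bar>inner (A$i) (transpose B $ j)\<bar>^2 \<le> (norm (A$i) * norm (transpose B $ j))^2"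
      by (intro power_mono) auto
    thus "(inner (A$i) (transpose B $ j))^2 \<le> (norm (A$i))^2 * (norm (transpose B $ j))^2"
      by (simp add: power_mult_distrib)
  qed
  also have "\<dots> = (norm A)^2 * (norm (transpose B))^2"
    unfolding norm_vec_sq[of A] norm_vec_sq[of "transpose B"] sum_product ..
  also have "\<dots> = (norm A * norm B)^2" by (simp add: norm_transpose power_mult_distrib)
  finally show ?thesis by (meson mult_nonneg_nonneg norm_ge_zero power2_le_imp_le)
qed

lemma inner_mm1: "inner (A::real^'p^'m) ((B::real^'n^'m) ** C) = inner (transpose B ** A) C"
proof -
  have "inner A (B ** C) = (\<Sum>i\<in>UNIV. \<Sum>j\<in>UNIV. \<Sum>k\<in>UNIV. A$i$j * (B$i$k * C$k$j))"
    by (simp add: inner_mat matrix_matrix_mult_def sum_distrib_left)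
  also have "\<dots> = (\<Sum>i\<in>UNIV. \<Sum>k\<in>UNIV. \<Sum>j\<in>UNIV. A$i$j * (B$i$k * C$k$j))"
    by (rule sum.cong[OF refl], rule sum.swap)
  also have "\<dots> = (\<Sum>k\<in>UNIV. \<Sum>i\<in>UNIV. \<Sum>j\<in>UNIV. A$i$j * (B$i$k * C$k$j))"
    by (rule sum.swap)
  also have "\<dots> = (\<Sum>k\<in>UNIV. \<Sum>j\<in>UNIV. \<Sum>i\<in>UNIV. A$i$j * (B$i$k * C$k$j))"
    by (rule sum.cong[OF refl], rule sum.swap)
  also have "\<dots> = inner (transpose B ** A) C"
    by (simp add: inner_mat matrix_matrix_mult_def transpose_def sum_distrib_left sum_distrib_right mult_ac)
  finally show ?thesis .
qed

lemma inner_transpose: "inner (transpose (A::real^'n^'m)) (transpose B) = inner A B"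
  unfolding inner_mat transpose_def by (simp, rule sum.swap)

lemma bilinear_mm: "bilinear ((**) :: real^'n^'m \<Rightarrow> real^'p^'n \<Rightarrow> real^'p^'m)"
  unfolding bilinear_def linear_iff
  by (auto simp: vec_eq_iff matrix_matrix_mult_def sum.distrib sum_distrib_left algebra_simps)

lemma linear_transpose: "linear (transpose :: real^'n^'m \<Rightarrow> real^'m^'n)"
  unfolding linear_iff by (auto simp: vec_eq_iff transpose_def)


definition LL :: "('a::metric_space \<Rightarrow> 'b::metric_space) \<Rightarrow> bool" where
  "LL f \<longleftrightarrow> (\<forall>x. \<exists>e>0. \<exists>K. K-lipschitz_on (ball x e) f)"

lemma LL_const: "LL (\<lambda>x. c)"
  unfolding LL_def using lipschitz_on_constant zero_less_one by blast

lemma LL_id: "LL (\<lambda>x. x)"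
  unfolding LL_def using lipschitz_on_id zero_less_one by blast

lemma LL_common:
  fixes f :: "'a::metric_space \<Rightarrow> 'b::metric_space" and g :: "'a \<Rightarrow> 'c::metric_space" and x :: 'a
  assumes "LL f" "LL g"
  obtains e Kf Kg where "e > 0" "Kf-lipschitz_on (ball x e) f" "Kg-lipschitz_on (ball x e) g"
proof -
  obtain e1 K1 where 1: "e1 > 0" "K1-lipschitz_on (ball x e1) f" using assms(1) unfolding LL_def by blast
  obtain e2 K2 where 2: "e2 > 0" "K2-lipschitz_on (ball x e2) g" using assms(2) unfolding LL_def by blast
  show ?thesis
  proof (rule that[of "min e1 e2" K1 K2])
    show "0 < min e1 e2" using 1 2 by simp
    show "K1-lipschitz_on (ball x (min e1 e2)) f" by (rule lipschitz_on_subset[OF 1(2)]) auto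
    show "K2-lipschitz_on (ball x (min e1 e2)) g" by (rule lipschitz_on_subset[OF 2(2)]) auto
  qed
qed

lemma LL_add:
  fixes f g :: "'a::metric_space \<Rightarrow> 'b::real_normed_vector"
  assumes "LL f" "LL g" shows "LL (\<lambda>x. f x + g x)"
  unfolding LL_def
proof
  fix x
  obtain e Kf Kg where "e > 0" "Kf-lipschitz_on (ball x e) f" "Kg-lipschitz_on (ball x e) g"
    using LL_common[OF assms] by blast
  thus "\<exists>e>0. \<exists>K. K-lipschitz_on (ball x e) (\<lambda>x. f x + g x)" using lipschitz_on_add by blast
qed

lemma LL_diff:
  fixes f g :: "'a::metric_space \<Rightarrow> 'b::real_normed_vector"
  assumes "LL f" "LL g" shows "LL (\<lambda>x. f x - g x)"
  unfolding LL_def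
proof
  fix x
  obtain e Kf Kg where "e > 0" "Kf-lipschitz_on (ball x e) f" "Kg-lipschitz_on (ball x e) g"
    using LL_common[OF assms] by blast
  thus "\<exists>e>0. \<exists>K. K-lipschitz_on (ball x e) (\<lambda>x. f x - g x)" using lipschitz_on_diff by blast
qed

lemma LL_bounded:
  fixes f :: "'a::metric_space \<Rightarrow> 'b::real_normed_vector"
  assumes "K-lipschitz_on (ball x e) f" "y \<in> ball x e"
  shows "norm (f y) \<le> norm (f x) + K * e"
proof -
  have K: "K \<ge> 0" using assms(1) lipschitz_on_nonneg by blast
  have "x \<in> ball x e" using assms(2) by (metis centre_in_ball dist_not_less_zero mem_ball not_less order_le_less_trans)
  hence "dist (f y) (f x) \<le> K * dist y x" using assms lipschitz_onD by blast
  also have "\<dots> \<le> K * e" using assms(2) K by (intro mult_left_mono) (auto simp: dist_commute)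
  finally show ?thesis by (metis dist_norm norm_triangle_sub order_trans add_le_cancel_left
        add.commute)
qed

lemma LL_bilinear:
  fixes f :: "'a::metric_space \<Rightarrow> 'b::real_normed_vector" and g :: "'a \<Rightarrow> 'c::real_normed_vector"
    and prod :: "'b \<Rightarrow> 'c \<Rightarrow> 'd::real_normed_vector"
  assumes bb: "bounded_bilinear prod" and "LL f" "LL g"
  shows "LL (\<lambda>x. prod (f x) (g x))"
  unfolding LL_def
proof
  fix x
  obtain e Kf Kg where e: "e > 0" and lf: "Kf-lipschitz_on (ball x e) f" and lg: "Kg-lipschitz_on (ball x e) g"
    using LL_common[OF assms(2,3)] by blast
  obtain K where K: "K > 0" "\<And>a b. norm (prod a b) \<le> norm a * norm b * K"
    using bounded_bilinear.pos_bounded[OF bb] by blast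
  have Kf: "Kf \<ge> 0" using lf lipschitz_on_nonneg by blast
  have Kg: "Kg \<ge> 0" using lg lipschitz_on_nonneg by blast
  define Bf where "Bf = norm (f x) + Kf * e"
  define Bg where "Bg = norm (g x) + Kg * e"
  have bf: "norm (f y) \<le> Bf" if "y \<in> ball x e" for y using LL_bounded[OF lf that] Bf_def by simp
  have bg: "norm (g y) \<le> Bg" if "y \<in> ball x e" for y using LL_bounded[OF lg that] Bg_def by simp
  have Bf0: "Bf \<ge> 0" using bf e by (meson centre_in_ball norm_ge_zero order_trans)
  have Bg0: "Bg \<ge> 0" using bg e by (meson centre_in_ball norm_ge_zero order_trans)
  have "(K * (Kf * Bg + Bf * Kg))-lipschitz_on (ball x e) (\<lambda>x. prod (f x) (g x))"
  proof (rule lipschitz_onI)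
    fix y z assume y: "y \<in> ball x e" and z: "z \<in> ball x e"
    have eq: "prod (f y) (g y) - prod (f z) (g z) = prod (f y - f z) (g y) + prod (f z) (g y - g z)"
      by (simp add: bounded_bilinear.diff_left[OF bb] bounded_bilinear.diff_right[OF bb])
    have df: "norm (f y - f z) \<le> Kf * dist y z" using lipschitz_onD[OF lf y z] by (simp add: dist_norm)
    have dg: "norm (g y - g z) \<le> Kg * dist y z" using lipschitz_onD[OF lg y z] by (simp add: dist_norm)
    have "norm (prod (f y) (g y) - prod (f z) (g z))
        \<le> norm (prod (f y - f z) (g y)) + norm (prod (f z) (g y - g z))"
      unfolding eq by (rule norm_triangle_ineq)
    also have "\<dots> \<le> norm (f y - f z) * norm (g y) * K + norm (f z) * norm (g y - g z) * K"
      using K by (intro add_mono) auto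
    also have "\<dots> \<le> (Kf * dist y z) * Bg * K + Bf * (Kg * dist y z) * K"
      using K df dg bf[OF z] bg[OF y] Kf Kg Bf0 Bg0
      by (intro add_mono mult_right_mono mult_mono) auto
    also have "\<dots> = K * (Kf * Bg + Bf * Kg) * dist y z" by (simp add: algebra_simps)
    finally show "dist (prod (f y) (g y)) (prod (f z) (g z)) \<le> K * (Kf * Bg + Bf * Kg) * dist y z"
      by (simp add: dist_norm)
  next
    show "0 \<le> K * (Kf * Bg + Bf * Kg)" using K Kf Kg Bf0 Bg0 by simp
  qed
  thus "\<exists>e>0. \<exists>K. K-lipschitz_on (ball x e) (\<lambda>x. prod (f x) (g x))" using e by blast
qed

lemma LL_comp:
  fixes f :: "'a::metric_space \<Rightarrow> 'b::metric_space" and \<phi> :: "'b \<Rightarrow> 'c::metric_space"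
  assumes "C-lipschitz_on T \<phi>" "\<And>x. f x \<in> T" "LL f"
  shows "LL (\<lambda>x. \<phi> (f x))"
  unfolding LL_def
proof
  fix x
  obtain e K where e: "e > 0" "K-lipschitz_on (ball x e) f" using assms(3) unfolding LL_def by blast
  have "(C * K)-lipschitz_on (ball x e) (\<phi> \<circ> f)"
    by (rule lipschitz_on_compose[OF e(2)]) (rule lipschitz_on_subset[OF assms(1)], use assms(2) in auto)
  thus "\<exists>e>0. \<exists>K. K-lipschitz_on (ball x e) (\<lambda>x. \<phi> (f x))" using e by (auto simp: o_def)
qed

lemma LL_linear:
  fixes f :: "'a::metric_space \<Rightarrow> 'b::real_normed_vector" and L :: "'b \<Rightarrow> 'c::real_normed_vector"
  assumes "bounded_linear L" "LL f"
  shows "LL (\<lambda>x. L (f x))"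
proof -
  obtain K where K: "K > 0" "\<And>x. norm (L x) \<le> norm x * K" using bounded_linear.pos_bounded[OF assms(1)] by blast
  have "K-lipschitz_on UNIV L"
    apply (rule lipschitz_onI)
    using K by (auto simp: dist_norm linear_diff[OF bounded_linear.linear[OF assms(1)], symmetric] mult.commute)
  thus ?thesis using LL_comp[OF _ _ assms(2)] by blast
qed


type_synonym mat3 = "real^3^3"

lemma bb_mm: "bounded_bilinear ((**) :: mat3 \<Rightarrow> mat3 \<Rightarrow> mat3)"
  using bilinear_mm bilinear_conv_bounded_bilinear by blast

lemma bl_transpose: "bounded_linear (transpose :: mat3 \<Rightarrow> mat3)"
  using linear_transpose linear_conv_bounded_linear by blast

lemma transpose_diff: "transpose (A - B) = transpose A - transpose (B::mat3)"
  by (simp add: vec_eq_iff transpose_def)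
lemma transpose_add: "transpose (A + B) = transpose A + transpose (B::mat3)"
  by (simp add: vec_eq_iff transpose_def)
lemma transpose_scaleR: "transpose (c *\<^sub>R A) = c *\<^sub>R transpose (A::mat3)"
  by (simp add: vec_eq_iff transpose_def)

lemmas mm_add_left = bounded_bilinear.add_left[OF bb_mm]
lemmas mm_add_right = bounded_bilinear.add_right[OF bb_mm]
lemmas mm_scaleR_left = bounded_bilinear.scaleR_left[OF bb_mm]
lemmas mm_scaleR_right = bounded_bilinear.scaleR_right[OF bb_mm]

lemma bl_mulL: "bounded_linear (\<lambda>h::mat3. (A::mat3) ** h)"
  by (rule bounded_bilinear.bounded_linear_right[OF bb_mm])
lemma bl_mulR: "bounded_linear (\<lambda>h::mat3. h ** (A::mat3))"
  by (rule bounded_bilinear.bounded_linear_left[OF bb_mm])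
lemma bl_tr: "bounded_linear (\<lambda>h::mat3. (A::mat3) ** (transpose h ** (B::mat3)))"
  using bounded_linear_compose[OF bl_mulL bounded_linear_compose[OF bl_mulR bl_transpose]]
  by (simp add: o_def)
lemma bl_out: "bounded_linear (\<lambda>h::mat3. inner (w::mat3) h *\<^sub>R (v::mat3))"
  by (rule bounded_linear_compose[OF bounded_linear_scaleR_left bounded_linear_inner_right])

definition mulLb :: "mat3 \<Rightarrow> mat3 \<Rightarrow>\<^sub>L mat3" where "mulLb A = Blinfun (\<lambda>h. A ** h)"
definition mulRb :: "mat3 \<Rightarrow> mat3 \<Rightarrow>\<^sub>L mat3" where "mulRb A = Blinfun (\<lambda>h. h ** A)"
definition trb :: "mat3 \<Rightarrow> mat3 \<Rightarrow> mat3 \<Rightarrow>\<^sub>L mat3" where "trb A B = Blinfun (\<lambda>h. A ** (transpose h ** B))"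
definition outb :: "mat3 \<Rightarrow> mat3 \<Rightarrow> mat3 \<Rightarrow>\<^sub>L mat3" where "outb v w = Blinfun (\<lambda>h. inner w h *\<^sub>R v)"

lemma mulLb_apply[simp]: "blinfun_apply (mulLb A) h = A ** h"
  by (simp add: mulLb_def bounded_linear_Blinfun_apply[OF bl_mulL])
lemma mulRb_apply[simp]: "blinfun_apply (mulRb A) h = h ** A"
  by (simp add: mulRb_def bounded_linear_Blinfun_apply[OF bl_mulR])
lemma trb_apply[simp]: "blinfun_apply (trb A B) h = A ** (transpose h ** B)"
  by (simp add: trb_def bounded_linear_Blinfun_apply[OF bl_tr])
lemma outb_apply[simp]: "blinfun_apply (outb v w) h = inner w h *\<^sub>R v"
  by (simp add: outb_def bounded_linear_Blinfun_apply[OF bl_out])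

lemma bl_mulLb: "bounded_linear mulLb"
  unfolding linear_conv_bounded_linear[symmetric] linear_iff
  by (auto intro!: blinfun_eqI simp: blinfun.add_left blinfun.scaleR_left mm_add_left mm_scaleR_left)
lemma bl_mulRb: "bounded_linear mulRb"
  unfolding linear_conv_bounded_linear[symmetric] linear_iff
  by (auto intro!: blinfun_eqI simp: blinfun.add_left blinfun.scaleR_left mm_add_right mm_scaleR_right)
lemma bb_trb: "bounded_bilinear trb"
  unfolding bilinear_conv_bounded_bilinear[symmetric] bilinear_def linear_iff
  by (auto intro!: blinfun_eqI simp: blinfun.add_left blinfun.scaleR_left mm_add_left mm_scaleR_left mm_add_right mm_scaleR_right)
lemma bb_outb: "bounded_bilinear outb"
  unfolding bilinear_conv_bounded_bilinear[symmetric] bilinear_def linear_iff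
  by (auto intro!: blinfun_eqI simp: blinfun.add_left blinfun.scaleR_left inner_add_left algebra_simps)


definition Mf :: "mat3 \<Rightarrow> mat3" where "Mf R = transpose R ** R - mat 1"
definition sf :: "real \<Rightarrow> mat3 \<Rightarrow> real" where "sf a R = sqrt ((norm (Mf R))^2 + a)"
definition isf :: "real \<Rightarrow> mat3 \<Rightarrow> real" where "isf a R = 1 / sf a R"
definition gf :: "real \<Rightarrow> mat3 \<Rightarrow> mat3" where "gf a R = (2 * isf a R) *\<^sub>R (R ** Mf R)"
definition Hf :: "real \<Rightarrow> mat3 \<Rightarrow> mat3 \<Rightarrow>\<^sub>L mat3" where
  "Hf a R = (2 * isf a R) *\<^sub>R (trb R R + mulLb (R ** transpose R) + mulRb (Mf R))
           - (4 * (isf a R * (isf a R * isf a R))) *\<^sub>R outb (R ** Mf R) (R ** Mf R)"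

lemma P1_eq: "P1 a = sf a"
  by (auto simp: fun_eq_iff P1_def sf_def Mf_def frob_norm_eq)

lemma Mf_sym: "transpose (Mf R) = Mf R"
  by (simp add: Mf_def transpose_diff matrix_transpose_mul)

lemma sf_pos: "a > 0 \<Longrightarrow> sf a R > 0"
  unfolding sf_def by (simp add: add_nonneg_pos)

lemma Mf_deriv: "(Mf has_derivative (\<lambda>h. transpose h ** R + transpose R ** h)) (at R)"
proof -
  have "((\<lambda>R. transpose R ** R) has_derivative (\<lambda>h. transpose R ** h + transpose h ** R)) (at R)"
    using bounded_bilinear.FDERIV[OF bb_mm bounded_linear_imp_has_derivative[OF bl_transpose]
        has_derivative_ident] .
  then show ?thesis unfolding Mf_def
    by (rule has_derivative_eq_rhs[OF has_derivative_diff[OF _ has_derivative_const]]) (auto simp: add.commute)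
qed

lemma inner_DM: "inner (Mf R) (transpose h ** R + transpose R ** h) = 2 * inner (R ** Mf R) h"
proof -
  have 1: "inner (Mf R) (transpose R ** h) = inner (R ** Mf R) h"
    by (simp add: inner_mm1)
  have "inner (Mf R) (transpose h ** R) = inner (transpose (Mf R)) (transpose (transpose h ** R))"
    by (simp add: inner_transpose)
  also have "\<dots> = inner (Mf R) (transpose R ** h)" by (simp add: Mf_sym matrix_transpose_mul)
  finally show ?thesis using 1 by (simp add: inner_add_right)
qed

lemma sf_deriv:
  assumes "a > 0"
  shows "(sf a has_derivative (\<lambda>h. 2 * isf a R * inner (R ** Mf R) h)) (at R)"
proof -
  have q: "((\<lambda>R. inner (Mf R) (Mf R) + a) has_derivative (\<lambda>h. 4 * inner (R ** Mf R) h)) (at R)"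
    apply (rule has_derivative_eq_rhs[OF has_derivative_add[OF has_derivative_inner[OF Mf_deriv Mf_deriv] has_derivative_const]])
    by (auto simp: fun_eq_iff inner_commute[of _ "Mf R"] inner_DM)
  have pos: "0 < inner (Mf R) (Mf R) + a" using assms by (simp add: add_nonneg_pos)
  have "((\<lambda>R. sqrt (inner (Mf R) (Mf R) + a)) has_derivative
      (\<lambda>h. 4 * inner (R ** Mf R) h * (inverse (sqrt (inner (Mf R) (Mf R) + a)) / 2))) (at R)"
    by (rule has_derivative_real_sqrt[OF pos q])
  then show ?thesis
    unfolding sf_def isf_def power2_norm_eq_inner
    by (rule has_derivative_eq_rhs) (auto simp: fun_eq_iff field_simps)
qed

lemma P1_deriv:
  assumes "a > 0"
  shows "(P1 a has_derivative (\<lambda>h. gf a R \<bullet> h)) (at R)"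
  unfolding P1_eq gf_def
  by (rule has_derivative_eq_rhs[OF sf_deriv[OF assms]]) (auto simp: fun_eq_iff)

lemma isf_deriv:
  assumes "a > 0"
  shows "(isf a has_derivative (\<lambda>h. - 2 * (isf a R * (isf a R * isf a R)) * inner (R ** Mf R) h)) (at R)"
proof -
  have "((\<lambda>R. 1 / sf a R) has_derivative (\<lambda>h. - 1 * (inverse (sf a R) * (2 * isf a R * inner (R ** Mf R) h) * inverse (sf a R)) + 0 / sf a R)) (at R)"
    by (rule has_derivative_divide[OF has_derivative_const sf_deriv[OF assms]]) (metis sf_pos[OF assms] order_less_irrefl)
  then show ?thesis unfolding isf_def[abs_def]
    by (rule has_derivative_eq_rhs) (auto simp: fun_eq_iff isf_def field_simps)
qed

lemma gf_deriv:
  assumes "a > 0"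
  shows "(gf a has_derivative blinfun_apply (Hf a R)) (at R)"
proof -
  have RM: "((\<lambda>R. R ** Mf R) has_derivative (\<lambda>h. R ** (transpose h ** R + transpose R ** h) + h ** Mf R)) (at R)"
    using bounded_bilinear.FDERIV[OF bb_mm has_derivative_ident Mf_deriv] .
  have c: "((\<lambda>R. 2 * isf a R) has_derivative (\<lambda>h. 2 * (- 2 * (isf a R * (isf a R * isf a R)) * inner (R ** Mf R) h))) (at R)"
    using has_derivative_mult_right[OF isf_deriv[OF assms]] .
  show ?thesis unfolding gf_def[abs_def]
    apply (rule has_derivative_eq_rhs[OF has_derivative_scaleR[OF c RM]])
    by (auto simp: fun_eq_iff Hf_def algebra_simps mm_add_right matrix_mul_assoc blinfun.add_left blinfun.diff_left blinfun.scaleR_left)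
qed


lemma sqrt_lip:
  assumes "a > 0"
  shows "(1 / sqrt a)-lipschitz_on {0..} (\<lambda>t. sqrt (t + a))"
proof (rule lipschitz_onI)
  fix x y :: real assume x: "x \<in> {0..}" and y: "y \<in> {0..}"
  define u where "u = sqrt (x + a)"
  define v where "v = sqrt (y + a)"
  have u2: "u^2 = x + a" using x assms by (simp add: u_def)
  have v2: "v^2 = y + a" using y assms by (simp add: v_def)
  have ua: "u \<ge> sqrt a" using x assms by (simp add: u_def)
  have va: "v \<ge> sqrt a" using y assms by (simp add: v_def)
  have sa: "sqrt a > 0" using assms by simp
  have "\<bar>u - v\<bar> * (u + v) = \<bar>x - y\<bar>"
  proof -
    have "u + v > 0" using ua va sa by linarith
    hence "\<bar>u - v\<bar> * (u + v) = \<bar>(u - v) * (u + v)\<bar>" by (simp add: abs_mult)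
    also have "(u - v) * (u + v) = x - y" using u2 v2 by (simp add: algebra_simps power2_eq_square)
    finally show ?thesis .
  qed
  moreover have "\<bar>u - v\<bar> * sqrt a \<le> \<bar>u - v\<bar> * (u + v)"
    by (intro mult_left_mono) (use ua va sa in linarith, simp)
  ultimately have "\<bar>u - v\<bar> * sqrt a \<le> \<bar>x - y\<bar>" by simp
  hence "\<bar>u - v\<bar> \<le> \<bar>x - y\<bar> / sqrt a" using sa by (simp add: field_simps)
  thus "dist (sqrt (x + a)) (sqrt (y + a)) \<le> 1 / sqrt a * dist x y"
    by (simp add: u_def v_def dist_real_def)
qed (use assms in simp)

lemma inv_lip:
  assumes "c > 0"
  shows "(1 / c^2)-lipschitz_on {c..} (\<lambda>t::real. 1 / t)"
proof (rule lipschitz_onI)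
  fix x y :: real assume x: "x \<in> {c..}" and y: "y \<in> {c..}"
  have xp: "x > 0" "y > 0" using x y assms by auto
  have "c^2 \<le> x * y" using x y assms by (simp add: power2_eq_square mult_mono)
  have "dist (1/x) (1/y) = \<bar>x - y\<bar> / (x * y)" using xp
    by (simp add: dist_real_def field_simps abs_div abs_minus_commute)
  also have "\<dots> \<le> \<bar>x - y\<bar> / c^2" using \<open>c^2 \<le> x * y\<close> assms
    by (intro divide_left_mono) (use xp assms in auto)
  finally show "dist (1 / x) (1 / y) \<le> 1 / c\<^sup>2 * dist x y" by (simp add: dist_real_def)
qed (use assms in simp)

lemma LL_Hf:
  assumes "a > 0"
  shows "LL (Hf a)"
proof -
  have id: "LL (\<lambda>R::mat3. R)" by (rule LL_id)
  have tr: "LL (\<lambda>R::mat3. transpose R)" by (rule LL_linear[OF bl_transpose id])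
  have M: "LL Mf"
    unfolding Mf_def[abs_def] by (rule LL_diff[OF LL_bilinear[OF bb_mm tr id] LL_const])
  have RM: "LL (\<lambda>R. R ** Mf R)" by (rule LL_bilinear[OF bb_mm id M])
  have RRt: "LL (\<lambda>R::mat3. R ** transpose R)" by (rule LL_bilinear[OF bb_mm id tr])
  have q: "LL (\<lambda>R. inner (Mf R) (Mf R))" by (rule LL_bilinear[OF bounded_bilinear_inner M M])
  have s: "LL (sf a)"
    unfolding sf_def[abs_def] power2_norm_eq_inner
    by (rule LL_comp[OF sqrt_lip[OF assms] _ q]) simp
  have i: "LL (isf a)"
    unfolding isf_def[abs_def]
    by (rule LL_comp[OF inv_lip[of "sqrt a"] _ s]) (use assms in \<open>auto simp: sf_def\<close>)
  have i2: "LL (\<lambda>R. 2 * isf a R)" by (rule LL_bilinear[OF bounded_bilinear_mult LL_const i])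
  have i3: "LL (\<lambda>R. 4 * (isf a R * (isf a R * isf a R)))"
    by (rule LL_bilinear[OF bounded_bilinear_mult LL_const LL_bilinear[OF bounded_bilinear_mult i
          LL_bilinear[OF bounded_bilinear_mult i i]]])
  have B: "LL (\<lambda>R. trb R R + mulLb (R ** transpose R) + mulRb (Mf R))"
    by (rule LL_add[OF LL_add[OF LL_bilinear[OF bb_trb id id] LL_linear[OF bl_mulLb RRt]] LL_linear[OF bl_mulRb M]])
  have O: "LL (\<lambda>R. outb (R ** Mf R) (R ** Mf R))" by (rule LL_bilinear[OF bb_outb RM RM])
  show ?thesis unfolding Hf_def[abs_def]
    by (rule LL_diff[OF LL_bilinear[OF bounded_bilinear_scaleR i2 B] LL_bilinear[OF bounded_bilinear_scaleR i3 O]])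
qed


lemma inner_mat1: "inner (mat 1 :: mat3) (mat 1) = 3"
proof -
  have e: "\<And>i j::3. (if i = j then 1 else 0) * (if i = j then 1 else 0) = (if i = j then (1::real) else 0)"
    by simp
  show ?thesis by (simp add: inner_mat mat_def e)
qed

lemma norm_mat1: "norm (mat 1 :: mat3) \<le> 2"
proof -
  have "norm (mat 1 :: mat3) = sqrt 3" by (simp add: norm_eq_sqrt_inner inner_mat1)
  also have "\<dots> \<le> 2" by (rule real_le_lsqrt) auto
  finally show ?thesis .
qed

lemma normR_sq: "(norm R)^2 \<le> 2 * norm (Mf R) + 3"
proof -
  have "(norm R)^2 = inner (mat 1) (transpose R ** R)"
    by (simp add: inner_mm1 power2_norm_eq_inner)
  also have "transpose R ** R = Mf R + mat 1" by (simp add: Mf_def)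
  also have "inner (mat 1) (Mf R + mat 1) = inner (mat 1) (Mf R) + 3"
    by (simp add: inner_add_right inner_mat1)
  also have "inner (mat 1) (Mf R) \<le> norm (mat 1 :: mat3) * norm (Mf R)"
    by (rule norm_cauchy_schwarz)
  also have "\<dots> \<le> 2 * norm (Mf R)" by (rule mult_right_mono[OF norm_mat1]) simp
  finally show ?thesis by simp
qed

lemma Hf_bound:
  assumes "a > 0"
  shows "norm (blinfun_apply (Hf a R) h) \<le> (18 + 24 / sqrt a) * norm h"
proof -
  define s where "s = sf a R"
  define m where "m = norm (Mf R)"
  define r where "r = norm R"
  define p where "p = 1 / s"
  define q where "q = m / s"
  have spos: "s > 0" using sf_pos[OF assms] s_def by simp
  have s2: "s^2 = m^2 + a" using assms by (simp add: s_def sf_def m_def)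
  have ms: "m \<le> s" by (rule power2_le_imp_le) (use s2 assms spos in auto)
  have as: "sqrt a \<le> s" by (rule real_le_lsqrt) (use s2 spos in auto)
  have m0: "m \<ge> 0" by (simp add: m_def)
  have r0: "r \<ge> 0" by (simp add: r_def)
  have q0: "0 \<le> q" "q \<le> 1" using ms spos m0 by (auto simp: q_def)
  have p0: "0 < p" "p \<le> 1 / sqrt a" using spos as assms by (auto simp: p_def frac_le)
  have r2: "r^2 \<le> 2 * m + 3" using normR_sq r_def m_def by simp
  have isf: "isf a R = p" by (simp add: isf_def p_def s_def)
  have app: "blinfun_apply (Hf a R) h = (2 * p) *\<^sub>R (R ** (transpose h ** R) + (R ** transpose R) ** h + h ** Mf R)
       - (4 * (p * (p * p)) * inner (R ** Mf R) h) *\<^sub>R (R ** Mf R)"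
    by (simp add: Hf_def isf blinfun.add_left blinfun.diff_left blinfun.scaleR_left)
  have a1: "norm (transpose h ** R) \<le> norm h * r"
    using norm_mm[of "transpose h" R] by (simp add: norm_transpose r_def)
  have n1: "norm (R ** (transpose h ** R)) \<le> r * r * norm h"
  proof -
    have "norm (R ** (transpose h ** R)) \<le> r * norm (transpose h ** R)" using norm_mm[of R] by (simp add: r_def)
    also have "\<dots> \<le> r * (norm h * r)" using a1 r0 by (rule mult_left_mono)
    finally show ?thesis by (simp add: algebra_simps)
  qed
  have a2: "norm (R ** transpose R) \<le> r * r"
    using norm_mm[of R "transpose R"] by (simp add: norm_transpose r_def)
  have n2: "norm ((R ** transpose R) ** h) \<le> r * r * norm h"
  proof -
    have "norm ((R ** transpose R) ** h) \<le> norm (R ** transpose R) * norm h" by (rule norm_mm)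
    also have "\<dots> \<le> r * r * norm h" using a2 by (rule mult_right_mono) simp
    finally show ?thesis .
  qed
  have n3: "norm (h ** Mf R) \<le> norm h * m" using norm_mm[of h "Mf R"] by (simp add: m_def)
  have n5: "norm (R ** Mf R) \<le> r * m" using norm_mm[of R "Mf R"] by (simp add: m_def r_def)
  have n4: "\<bar>inner (R ** Mf R) h\<bar> \<le> r * m * norm h"
    using order_trans[OF Cauchy_Schwarz_ineq2[of "R ** Mf R" h] mult_right_mono[OF n5 norm_ge_zero]] .
  have t1: "norm ((2 * p) *\<^sub>R (R ** (transpose h ** R) + (R ** transpose R) ** h + h ** Mf R))
      \<le> 2 * p * ((2 * r^2 + m) * norm h)"
  proof -
    have "norm (R ** (transpose h ** R) + (R ** transpose R) ** h + h ** Mf R) \<le> (2 * r^2 + m) * norm h"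
      using n1 n2 n3 norm_triangle_ineq[of "R ** (transpose h ** R) + (R ** transpose R) ** h" "h ** Mf R"]
        norm_triangle_ineq[of "R ** (transpose h ** R)" "(R ** transpose R) ** h"]
      by (simp add: power2_eq_square algebra_simps)
    thus ?thesis using p0 by (simp add: mult_left_mono)
  qed
  have t2: "norm ((4 * (p * (p * p)) * inner (R ** Mf R) h) *\<^sub>R (R ** Mf R)) \<le> 4 * p^3 * r^2 * m^2 * norm h"
  proof -
    have "norm ((4 * (p * (p * p)) * inner (R ** Mf R) h) *\<^sub>R (R ** Mf R))
        = 4 * p^3 * (\<bar>inner (R ** Mf R) h\<bar> * norm (R ** Mf R))"
      using p0 by (simp add: abs_mult power3_eq_cube)
    also have "\<dots> \<le> 4 * p^3 * ((r * m * norm h) * (r * m))"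
      using n4 n5 p0 r0 m0 by (intro mult_left_mono mult_mono) auto
    finally show ?thesis by (simp add: power2_eq_square algebra_simps)
  qed
  have c1: "2 * p * (2 * r^2 + m) \<le> 10 + 12 / sqrt a"
  proof -
    have "2 * p * (2 * r^2 + m) \<le> 2 * p * (5 * m + 6)" using r2 p0 by (intro mult_left_mono) auto
    also have "\<dots> = 10 * q + 12 * p" using spos by (simp add: p_def q_def field_simps)
    also have "\<dots> \<le> 10 + 12 / sqrt a" using q0 p0 by simp
    finally show ?thesis .
  qed
  have c2: "4 * p^3 * r^2 * m^2 \<le> 8 + 12 / sqrt a"
  proof -
    have "4 * p^3 * r^2 * m^2 \<le> 4 * p^3 * (2 * m + 3) * m^2" using r2 p0
      by (intro mult_right_mono mult_left_mono) auto
    also have "\<dots> = 4 * q^2 * (2 * q + 3 * p)" using spos by (simp add: p_def q_def field_simps power2_eq_square power3_eq_cube)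
    also have "\<dots> \<le> 4 * 1 * (2 * q + 3 * p)" using q0 p0
      by (intro mult_right_mono mult_left_mono) (auto simp: power_le_one)
    also have "\<dots> \<le> 8 + 12 / sqrt a" using q0 p0 by simp
    finally show ?thesis .
  qed
  have "norm (blinfun_apply (Hf a R) h) \<le> 2 * p * ((2 * r^2 + m) * norm h) + 4 * p^3 * r^2 * m^2 * norm h"
    unfolding app by (rule order_trans[OF norm_triangle_ineq4 add_mono[OF t1 t2]])
  also have "\<dots> = (2 * p * (2 * r^2 + m) + 4 * p^3 * r^2 * m^2) * norm h" by (simp add: algebra_simps)
  also have "\<dots> \<le> (18 + 24 / sqrt a) * norm h" using c1 c2 by (intro mult_right_mono) auto
  finally show ?thesis .
qed

lemma gf_lip:
  assumes "a > 0"
  shows "norm (gf a x - gf a y) \<le> (18 + 24 / sqrt a) * norm (x - y)"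
proof (rule differentiable_bound[of UNIV])
  fix z assume "z \<in> (UNIV::mat3 set)"
  show "(gf a has_derivative blinfun_apply (Hf a z)) (at z within UNIV)" using gf_deriv[OF assms] by simp
  show "onorm (blinfun_apply (Hf a z)) \<le> 18 + 24 / sqrt a" by (rule onorm_le[OF Hf_bound[OF assms]])
qed auto

lemma convex_grad:
  fixes f :: "'a::euclidean_space \<Rightarrow> real"
  assumes d: "\<And>x. (f has_derivative (\<lambda>h. G x \<bullet> h)) (at x)"
    and mono: "\<And>x y. 0 \<le> (G x - G y) \<bullet> (x - y)"
  shows "convex_on UNIV f"
proof (rule convex_onI)
  fix t :: real and x y :: 'a assume t: "0 < t" "t < 1"
  define \<phi> where "\<phi> u = f (x + u *\<^sub>R (y - x))" for u
  define \<phi>' where "\<phi>' u = G (x + u *\<^sub>R (y - x)) \<bullet> (y - x)" for u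
  have der: "(\<phi> has_real_derivative \<phi>' u) (at u)" for u
  proof -
    have l: "((\<lambda>u. x + u *\<^sub>R (y - x)) has_derivative (\<lambda>h. h *\<^sub>R (y - x))) (at u)"
      by (auto intro!: derivative_eq_intros)
    have "((\<lambda>u. f (x + u *\<^sub>R (y - x))) has_derivative (\<lambda>h. G (x + u *\<^sub>R (y - x)) \<bullet> (h *\<^sub>R (y - x)))) (at u)"
      using has_derivative_compose[OF l d] by (simp add: o_def)
    thus ?thesis unfolding has_field_derivative_def \<phi>_def[abs_def] \<phi>'_def
      by (rule has_derivative_eq_rhs) (auto simp: fun_eq_iff)
  qed
  have "convex_on UNIV \<phi>"
  proof (rule convex_on_realI[OF _ der])
    fix u v :: real assume "u \<le> v"
    have "0 \<le> (G (x + v *\<^sub>R (y - x)) - G (x + u *\<^sub>R (y - x))) \<bullet> ((x + v *\<^sub>R (y - x)) - (x + u *\<^sub>R (y - x)))"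
      by (rule mono)
    also have "\<dots> = (v - u) * (\<phi>' v - \<phi>' u)"
      by (simp add: \<phi>'_def inner_diff_left scaleR_diff_left[symmetric] algebra_simps)
    finally have "0 \<le> (v - u) * (\<phi>' v - \<phi>' u)" .
    thus "\<phi>' u \<le> \<phi>' v" using \<open>u \<le> v\<close>
      by (cases "u = v") (auto simp: zero_le_mult_iff)
  qed auto
  hence "\<phi> t \<le> (1 - t) * \<phi> 0 + t * \<phi> 1"
    using convex_onD[of UNIV \<phi> t 0 1] t by simp
  thus "f ((1 - t) *\<^sub>R x + t *\<^sub>R y) \<le> (1 - t) * f x + t * f y"
    by (simp add: \<phi>_def algebra_simps)
qed auto


theorem lemma9:
  fixes a :: real
  assumes "a > 0"
  shows "(\<exists>g H. (\<forall>R. (P1 a has_derivative (\<lambda>h. g R \<bullet> h)) (at R)) \<and>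
                (\<forall>R. (g has_derivative blinfun_apply (H R)) (at R)) \<and>
                (\<forall>R. \<exists>e>0. \<exists>K. K-lipschitz_on (ball R e) H)) \<and>
         (\<exists>L. curvature_bounded L (P1 a))"
proof
  show "\<exists>g H. (\<forall>R. (P1 a has_derivative (\<lambda>h. g R \<bullet> h)) (at R)) \<and>
                (\<forall>R. (g has_derivative blinfun_apply (H R)) (at R)) \<and>
                (\<forall>R. \<exists>e>0. \<exists>K. K-lipschitz_on (ball R e) H)"
    using P1_deriv[OF assms] gf_deriv[OF assms] LL_Hf[OF assms] unfolding LL_def by blast
  define L where "L = 18 + 24 / sqrt a"
  have L0: "L \<ge> 0" using assms by (simp add: L_def)
  have lip: "norm (gf a x - gf a y) \<le> L * norm (x - y)" for x y
    using gf_lip[OF assms] L_def by simp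
  have conv: "convex_on UNIV (\<lambda>x. P1 a x + L / 2 * (norm x)^2)"
  proof (rule convex_grad[where G = "\<lambda>x. gf a x + L *\<^sub>R x"])
    fix x :: mat3
    have n: "((\<lambda>x. L / 2 * inner x x) has_derivative (\<lambda>h. L / 2 * (inner x h + inner h x))) (at x)"
      by (rule has_derivative_mult_right[OF has_derivative_inner[OF has_derivative_ident has_derivative_ident]])
    show "((\<lambda>x. P1 a x + L / 2 * (norm x)^2) has_derivative (\<lambda>h. (gf a x + L *\<^sub>R x) \<bullet> h)) (at x)"
      unfolding power2_norm_eq_inner
      by (rule has_derivative_eq_rhs[OF has_derivative_add[OF P1_deriv[OF assms] n]])
        (auto simp: fun_eq_iff inner_add_left inner_commute[of _ x])
  next
    fix x y :: mat3
    have "(gf a x + L *\<^sub>R x - (gf a y + L *\<^sub>R y)) \<bullet> (x - y)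
        = (gf a x - gf a y) \<bullet> (x - y) + L * (norm (x - y))^2"
      by (simp add: power2_norm_eq_inner inner_diff_left inner_diff_right inner_add_left algebra_simps)
    moreover have "- (norm (gf a x - gf a y) * norm (x - y)) \<le> (gf a x - gf a y) \<bullet> (x - y)"
      using Cauchy_Schwarz_ineq2[of "gf a x - gf a y" "x - y"] by linarith
    moreover have "norm (gf a x - gf a y) * norm (x - y) \<le> L * norm (x - y) * norm (x - y)"
      using lip by (rule mult_right_mono) simp
    ultimately show "0 \<le> (gf a x + L *\<^sub>R x - (gf a y + L *\<^sub>R y)) \<bullet> (x - y)"
      by (simp add: power2_eq_square)
  qed
  have "curvature_bounded L (P1 a)"
    unfolding curvature_bounded_def
    using conv P1_deriv[OF assms] lip by blast
  thus "\<exists>L. curvature_bounded L (P1 a)" by blast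
qed

end
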